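(* Let $p\in(0,1)$ and let $(\lambda_n)_{n\ge1}$ be a sequence with $\lambda_1=1$ and $0<\lambda_n\le\lambda_{n-1}$ for all $n>1$. Let $r_1,r_2,\dots$ be $\{0,1\}$-valued random variables with $\Pr(r_1=1)=p$ and, for every $n\ge2$, $\Pr(r_n=1\mid r_1,\dots,r_{n-1})=\lambda_n p+(1-\lambda_n)\bar p_{n-1}$, where $\bar p_m=\frac1m\sum_{i=1}^m r_i$. Define $\hat r_1=r_1$ and $\hat r_i=\frac{r_i-(1-\lambda_i)\bar p_{i-1}}{\lambda_i}$ for $i\ge2$. Then for all $i>j\ge1$, \[\mathbb{E}[\hat r_i\mid\hat r_j]=\mathbb{E}[\hat r_i\mid\bar p_j]=p.\] *)

theory Defs
  imports "HOL-Probability.Probability"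
begin

definition pbar :: "(nat \<Rightarrow> 'a \<Rightarrow> real) \<Rightarrow> nat \<Rightarrow> 'a \<Rightarrow> real" where
  "pbar r m x = (\<Sum>i = 1..m. r i x) / real m"

definition rhat :: "(nat \<Rightarrow> real) \<Rightarrow> (nat \<Rightarrow> 'a \<Rightarrow> real) \<Rightarrow> nat \<Rightarrow> 'a \<Rightarrow> real" where
  "rhat lam r i x = (if i = 1 then r 1 x
                     else (r i x - (1 - lam i) * pbar r (i - 1) x) / lam i)"

definition gen_by :: "'a measure \<Rightarrow> (nat \<Rightarrow> 'a \<Rightarrow> real) \<Rightarrow> nat set \<Rightarrow> 'a measure" where
  "gen_by M r I = vimage_algebra (space M) (\<lambda>x. \<lambda>i\<in>I. r i x) (PiM I (\<lambda>_. borel))"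

definition gen1 :: "'a measure \<Rightarrow> ('a \<Rightarrow> real) \<Rightarrow> 'a measure" where
  "gen1 M X = vimage_algebra (space M) X borel"

end

theory Submission
  imports Defs
begin

lemma sfs_of_prob:
  assumes "prob_space M" "subalgebra M F"
  shows "sigma_finite_subalgebra M F"
proof -
  interpret prob_space M by fact
  have "finite_measure_subalgebra M F"
    by (unfold_locales) (rule assms(2))
  then show ?thesis by (rule finite_measure_subalgebra_is_sigma_finite)
qed

lemma gen_by_meas:
  assumes "\<And>n. n \<in> I \<Longrightarrow> r n \<in> borel_measurable M"
  shows "(\<lambda>x. \<lambda>i\<in>I. r i x) \<in> measurable M (PiM I (\<lambda>_. borel))"
  using assms by (intro measurable_restrict) auto

lemma gen_by_subalg:
  assumes "\<And>n. n \<in> I \<Longrightarrow> r n \<in> borel_measurable M"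
  shows "subalgebra M (gen_by M r I)"
proof -
  have m: "(\<lambda>x. \<lambda>i\<in>I. r i x) \<in> measurable M (PiM I (\<lambda>_. borel))"
    using gen_by_meas assms by blast
  have "sets (gen_by M r I) = {(\<lambda>x. \<lambda>i\<in>I. r i x) -` A \<inter> space M | A. A \<in> sets (PiM I (\<lambda>_. borel))}"
    unfolding gen_by_def using m by (intro sets_vimage_algebra2) (auto simp: measurable_def)
  also have "\<dots> \<subseteq> sets M" using m by (auto simp: measurable_def)
  finally show ?thesis unfolding subalgebra_def gen_by_def by simp
qed

lemma gen_by_comp:
  assumes "k \<in> I"
  shows "r k \<in> borel_measurable (gen_by M r I)"
proof -
  have m: "(\<lambda>x. \<lambda>i\<in>I. r i x) \<in> measurable (gen_by M r I) (PiM I (\<lambda>_. borel))"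
    unfolding gen_by_def by (rule measurable_vimage_algebra1) (auto simp: space_PiM)
  have "(\<lambda>x. (\<lambda>i\<in>I. r i x) k) \<in> borel_measurable (gen_by M r I)"
    using measurable_compose[OF m measurable_component_singleton[OF assms]] by simp
  then show ?thesis using assms by simp
qed

lemma gen1_subalg:
  assumes "X \<in> borel_measurable F" "space F = space M"
  shows "subalgebra F (gen1 M X)"
proof -
  have "sets (gen1 M X) = {X -` A \<inter> space M | A. A \<in> sets borel}"
    unfolding gen1_def by (intro sets_vimage_algebra2) auto
  also have "\<dots> \<subseteq> sets F" using assms by (auto simp: measurable_def)
  finally show ?thesis unfolding subalgebra_def gen1_def using assms by simp
qed

lemma subalg_trans:
  "subalgebra M F \<Longrightarrow> subalgebra F G \<Longrightarrow> subalgebra M G"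
  unfolding subalgebra_def by auto

lemma tower_const:
  assumes "prob_space M" "subalgebra M F" "subalgebra F G"
    and f[measurable]: "integrable M f"
    and ae: "AE x in M. real_cond_exp M F f x = p"
  shows "AE x in M. real_cond_exp M G f x = p"
proof -
  have sG: "subalgebra M G" using subalg_trans assms by blast
  interpret G: sigma_finite_subalgebra M G using sfs_of_prob assms(1) sG by blast
  have 1: "AE x in M. real_cond_exp M G (real_cond_exp M F f) x = real_cond_exp M G f x"
    using G.real_cond_exp_nested_subalg[OF assms(2) assms(3) f] .
  have 2: "AE x in M. real_cond_exp M G (real_cond_exp M F f) x = real_cond_exp M G (\<lambda>_. p) x"
    by (rule G.real_cond_exp_cong[OF ae]) auto
  have 3: "AE x in M. real_cond_exp M G (\<lambda>_. p) x = p"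
  proof (rule G.real_cond_exp_F_meas)
    interpret prob_space M by fact
    show "integrable M (\<lambda>_. p)" by simp
  qed simp
  show ?thesis using 1 2 3 by eventually_elim simp
qed

theorem theoremA10:
  fixes M :: "'a measure" and r :: "nat \<Rightarrow> 'a \<Rightarrow> real"
    and lam :: "nat \<Rightarrow> real" and p :: real
  assumes "prob_space M"
    and "0 < p" and "p < 1"
    and "lam 1 = 1"
    and "\<And>n. n > 1 \<Longrightarrow> 0 < lam n \<and> lam n \<le> lam (n - 1)"
    and "\<And>n. n \<ge> 1 \<Longrightarrow> r n \<in> borel_measurable M"
    and "\<And>n x. n \<ge> 1 \<Longrightarrow> x \<in> space M \<Longrightarrow> r n x \<in> {0, 1}"
    and "measure M {x \<in> space M. r 1 x = 1} = p"
    and "\<And>n. n \<ge> 2 \<Longrightarrow>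
           AE x in M. real_cond_exp M (gen_by M r {1..n - 1}) (r n) x
                      = lam n * p + (1 - lam n) * pbar r (n - 1) x"
    and "1 \<le> j" and "j < i"
  shows "(AE x in M. real_cond_exp M (gen1 M (rhat lam r j)) (rhat lam r i) x = p)
       \<and> (AE x in M. real_cond_exp M (gen1 M (pbar r j)) (rhat lam r i) x = p)"
proof -
  interpret prob_space M by fact
  define F where "F = gen_by M r {1..i-1}"
  have i2: "i \<ge> 2" "i \<noteq> 1" using assms(10,11) by auto
  have lampos: "lam i > 0" using assms(5)[of i] i2 by auto
  have rint: "integrable M (r n)" if "n \<ge> 1" for n
  proof (rule integrable_const_bound[where B=1])
    show "AE x in M. norm (r n x) \<le> 1" using assms(7)[OF that] by (intro AE_I2) force
    show "r n \<in> borel_measurable M" using assms(6)[OF that] .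
  qed
  have pint: "integrable M (pbar r m)" for m
    unfolding pbar_def[abs_def] using rint by (intro integrable_divide integrable_sum) auto
  have subF: "subalgebra M F" unfolding F_def using assms(6) by (intro gen_by_subalg) auto
  have spF: "space F = space M" using subF by (simp add: subalgebra_def)
  interpret Fs: sigma_finite_subalgebra M F using sfs_of_prob[OF assms(1) subF] .
  have rF: "r k \<in> borel_measurable F" if "1 \<le> k" "k \<le> i - 1" for k
    unfolding F_def using that by (intro gen_by_comp) auto
  have pF: "pbar r m \<in> borel_measurable F" if "m \<le> i - 1" for m
    unfolding pbar_def[abs_def] using rF that by (intro borel_measurable_divide borel_measurable_sum) auto
  have rhF: "rhat lam r j \<in> borel_measurable F"
  proof (cases "j = 1")
    case True
    then show ?thesis unfolding rhat_def[abs_def] using rF[of 1] assms(11) by simp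
  next
    case False
    have "(\<lambda>x. (r j x - (1 - lam j) * pbar r (j - 1) x) / lam j) \<in> borel_measurable F"
      using rF[of j] pF[of "j-1"] assms(10,11) by (intro borel_measurable_divide borel_measurable_diff borel_measurable_times) auto
    then show ?thesis unfolding rhat_def[abs_def] using False by simp
  qed
  have rhi: "rhat lam r i = (\<lambda>x. (r i x - (1 - lam i) * pbar r (i - 1) x) / lam i)"
    unfolding rhat_def[abs_def] using i2 by simp
  have rhint: "integrable M (rhat lam r i)"
    unfolding rhi using rint[of i] pint i2 by (intro integrable_divide integrable_diff integrable_mult_right) auto
  have key: "AE x in M. real_cond_exp M F (rhat lam r i) x = p"
  proof -
    have a1: "AE x in M. real_cond_exp M F (\<lambda>x. (r i x - (1 - lam i) * pbar r (i - 1) x) / lam i) x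
        = real_cond_exp M F (\<lambda>x. r i x - (1 - lam i) * pbar r (i - 1) x) x / lam i"
      using rint[of i] pint i2 by (intro Fs.real_cond_exp_cdiv integrable_diff integrable_mult_right) auto
    have a2: "AE x in M. real_cond_exp M F (\<lambda>x. r i x - (1 - lam i) * pbar r (i - 1) x) x
        = real_cond_exp M F (r i) x - real_cond_exp M F (\<lambda>x. (1 - lam i) * pbar r (i - 1) x) x"
      using rint[of i] pint i2 by (intro Fs.real_cond_exp_diff integrable_mult_right) auto
    have a3: "AE x in M. real_cond_exp M F (\<lambda>x. (1 - lam i) * pbar r (i - 1) x) x = (1 - lam i) * pbar r (i - 1) x"
      using pint pF[of "i-1"] by (intro Fs.real_cond_exp_F_meas integrable_mult_right borel_measurable_times) auto
    have a4: "AE x in M. real_cond_exp M F (r i) x = lam i * p + (1 - lam i) * pbar r (i - 1) x"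
      unfolding F_def using assms(9)[OF i2(1)] .
    show ?thesis unfolding rhi using a1 a2 a3 a4
    proof eventually_elim
      case (elim x)
      then have "real_cond_exp M F (\<lambda>x. (r i x - (1 - lam i) * pbar r (i - 1) x) / lam i) x
          = (lam i * p) / lam i" by simp
      then show ?case using lampos by simp
    qed
  qed
  have c1: "AE x in M. real_cond_exp M (gen1 M (rhat lam r j)) (rhat lam r i) x = p"
    by (rule tower_const[OF assms(1) subF gen1_subalg[OF rhF spF] rhint key])
  have c2: "AE x in M. real_cond_exp M (gen1 M (pbar r j)) (rhat lam r i) x = p"
    using assms(11) by (intro tower_const[OF assms(1) subF gen1_subalg[OF pF spF] rhint key]) auto
  show ?thesis using c1 c2 by simp
qed

end
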